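(* Let $T$ be a location measure defined on (the distributions of) all real random variables with finite variance, and suppose $T$ is additive, i.e. $T(x+y)=T(x)+T(y)$ for all independent $x,y$ with finite variances. Suppose $T$ is continuous at $N(0,1)$: whenever $z_n\to_d z\sim N(0,1)$ (with each $z_n$ of finite variance), $T(z_n)\to T(z)=0$. Then $T(x)=E(x)$ for every real random variable $x$ with finite second moment.
   Context: A location measure is a map $T$ from (distributions of) real random variables to $\mathbb{R}$, depending only on the distribution of its argument, such that $T(ax+b)=aT(x)+b$ for all $a,b\in\mathbb{R}$. *)

theory Defs
  imports "HOL-Probability.Probability"
begin

definition finvar_dists :: "real measure set" where
  "finvar_dists = {M. real_distribution M \<and> integrable M (\<lambda>x. x^2)}"

definition location_measure :: "(real measure \<Rightarrow> real) \<Rightarrow> bool" where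
  "location_measure T \<longleftrightarrow>
     (\<forall>M\<in>finvar_dists. \<forall>a b::real.
        T (distr M borel (\<lambda>x. a * x + b)) = a * T M + b)"

text \<open>Additivity: the law of x + y for independent x, y is the convolution of the laws.\<close>
definition additive_location :: "(real measure \<Rightarrow> real) \<Rightarrow> bool" where
  "additive_location T \<longleftrightarrow>
     (\<forall>M\<in>finvar_dists. \<forall>N\<in>finvar_dists. T (M \<star> N) = T M + T N)"

end

theory Submission imports Defs begin

lemma finvar_affine:
  assumes "M \<in> finvar_dists"
  shows "distr M borel (\<lambda>x. a * x + b) \<in> finvar_dists"
proof -
  interpret real_distribution M using assms by (simp add: finvar_dists_def)
  have i2: "integrable M (\<lambda>x. x^2)" using assms by (simp add: finvar_dists_def)
  have i1: "integrable M (\<lambda>x. x)"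
    by (rule square_integrable_imp_integrable[OF _ i2]) simp
  have "integrable M (\<lambda>x. a^2 * x^2 + 2*a*b * x + b^2)"
    using i1 i2 by auto
  then have "integrable M (\<lambda>x. (a * x + b)^2)"
    by (simp add: power2_eq_square algebra_simps)
  then show ?thesis
    by (simp add: finvar_dists_def integrable_distr_eq real_distribution_distr)
qed

lemma prodspace:
  assumes "real_distribution M"
  shows "product_prob_space (\<lambda>_::nat. M)"
proof -
  interpret real_distribution M by fact
  show ?thesis
    by (simp add: product_prob_space_def product_prob_space_axioms_def product_sigma_finite_def
        prob_space_axioms sigma_finite_measure)
qed

lemma pos_case:
  fixes T :: "real measure \<Rightarrow> real"
  assumes loc: "location_measure T"
    and add: "additive_location T"
    and cont: "\<And>Z. (\<forall>n. Z n \<in> finvar_dists) \<Longrightarrow> weak_conv_m Z std_normal_distribution \<Longrightarrow>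
                 (\<lambda>n. T (Z n)) \<longlonglongrightarrow> T std_normal_distribution"
    and T0: "T std_normal_distribution = 0"
    and Mf: "M \<in> finvar_dists"
    and sig: "\<sigma> > 0"
    and var: "(\<integral>x. (x - (\<integral>x. x \<partial>M))^2 \<partial>M) = \<sigma>^2"
  shows "T M = (\<integral>x. x \<partial>M)"
proof -
  define \<mu> where "\<mu> = (\<integral>x. x \<partial>M)"
  interpret real_distribution M using Mf by (simp add: finvar_dists_def)
  have i2: "integrable M (\<lambda>x. x^2)" using Mf by (simp add: finvar_dists_def)
  have i1: "integrable M (\<lambda>x. x)"
    by (rule square_integrable_imp_integrable[OF _ i2]) simp
  interpret P: product_prob_space "\<lambda>_::nat. M" UNIV
    using prodspace[of M] real_distribution_axioms by simp
  define P where "P = PiM (UNIV::nat set) (\<lambda>_. M)"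
  have Xrv[measurable]: "(\<lambda>\<omega>. \<omega> i) \<in> borel_measurable P" for i
  proof -
    have "(\<lambda>\<omega>. \<omega> i) \<in> measurable P M" unfolding P_def
      by (rule measurable_component_singleton) simp
    then show ?thesis using measurable_cong_sets[OF refl events_eq_borel, of P] by simp
  qed
  have Xd: "distr P borel (\<lambda>\<omega>. \<omega> i) = M" for i
  proof -
    have "distr P M (\<lambda>\<omega>. \<omega> i) = M" unfolding P_def
      by (rule distr_PiM_component) (auto simp: prob_space_axioms)
    moreover have "distr P borel (\<lambda>\<omega>. \<omega> i) = distr P M (\<lambda>\<omega>. \<omega> i)"
      by (rule distr_cong) (auto simp only: events_eq_borel)
    ultimately show ?thesis by simp
  qed
  have indep: "P.indep_vars (\<lambda>_. borel) (\<lambda>i \<omega>. \<omega> i) UNIV"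
  proof (subst P.indep_vars_iff_distr_eq_PiM)
    show "P.random_variable borel (\<lambda>\<omega>. \<omega> i)" for i using Xrv unfolding P_def by simp
    have d: "distr P (PiM UNIV (\<lambda>_. borel)) (\<lambda>x. x) = P"
      by (rule distr_id2) (unfold P_def, rule sets_PiM_cong, simp_all only: events_eq_borel)
    have e: "PiM UNIV (\<lambda>i. distr P borel (\<lambda>x. x i)) = P"
      using Xd by (simp add: P_def)
    have r: "(\<lambda>x. restrict x (UNIV::nat set)) = (\<lambda>x::nat\<Rightarrow>real. x)" by (auto simp: restrict_def)
    have "distr P (PiM UNIV (\<lambda>_. borel)) (\<lambda>x. restrict x UNIV) = PiM UNIV (\<lambda>i. distr P borel (\<lambda>x. x i))"
      unfolding r d e ..
    then show "distr (Pi\<^sub>M (UNIV::nat set) (\<lambda>_. M)) (Pi\<^sub>M UNIV (\<lambda>_. borel)) (\<lambda>x. \<lambda>i\<in>UNIV. x i) =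
      Pi\<^sub>M UNIV (\<lambda>i. distr (Pi\<^sub>M UNIV (\<lambda>_. M)) borel (\<lambda>x. x i))"
      unfolding P_def .
  qed simp
  have Xint2: "integrable P (\<lambda>\<omega>. (\<omega> i)^2)" for i
  proof -
    have "integrable (distr P borel (\<lambda>\<omega>. \<omega> i)) (\<lambda>x. x^2)" unfolding Xd by (rule i2)
    then show ?thesis by (subst (asm) integrable_distr_eq[OF Xrv]) auto
  qed
  have Xint: "integrable P (\<lambda>\<omega>. \<omega> i)" for i
  proof -
    have "integrable (distr P borel (\<lambda>\<omega>. \<omega> i)) (\<lambda>x. x)" unfolding Xd by (rule i1)
    then show ?thesis by (subst (asm) integrable_distr_eq[OF Xrv]) auto
  qed
  have Xexp: "(\<integral>\<omega>. \<omega> i \<partial>P) = \<mu>" for i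
  proof -
    have "(\<integral>x. x \<partial>distr P borel (\<lambda>\<omega>. \<omega> i)) = \<mu>" unfolding Xd \<mu>_def ..
    then show ?thesis by (subst (asm) integral_distr[OF Xrv]) auto
  qed
  have Xvar: "(\<integral>\<omega>. (\<omega> i - \<mu>)^2 \<partial>P) = \<sigma>^2" for i
  proof -
    have "(\<integral>x. (x - \<mu>)^2 \<partial>distr P borel (\<lambda>\<omega>. \<omega> i)) = \<sigma>^2" unfolding Xd \<mu>_def by (rule var)
    then show ?thesis by (subst (asm) integral_distr[OF Xrv]) auto
  qed
  have clt: "weak_conv_m (\<lambda>n. distr P borel (\<lambda>x. (\<Sum>i<n. x i - \<mu>) / sqrt (n*\<sigma>^2))) std_normal_distribution"
    using P.central_limit_theorem[where X="\<lambda>i \<omega>. \<omega> i" and \<mu>=M and m=\<mu> and \<sigma>=\<sigma>, OF indep]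
      Xexp Xvar Xint2 Xd sig unfolding P_def by simp
  define S where "S n \<omega> = (\<Sum>i<n. \<omega> i)" for n and \<omega> :: "nat \<Rightarrow> real"
  define D where "D n = distr P borel (S n)" for n
  have Sm[measurable]: "S n \<in> borel_measurable P" for n
    unfolding S_def by measurable
  have sq: "(x+y)^2 \<le> 2*x^2+2*y^2" for x y :: real
    using zero_le_power2[of "x-y"] by (simp add: power2_diff power2_sum)
  have Sint2: "integrable P (\<lambda>\<omega>. (S n \<omega>)^2)" for n
  proof (induction n)
    case 0
    have "(\<lambda>\<omega>. (S 0 \<omega>)^2) = (\<lambda>\<omega>. 0)" by (simp add: S_def)
    then show ?case by (simp only: integrable_zero)
  next
    case (Suc n)
    have "integrable P (\<lambda>\<omega>. 2 * (S n \<omega>)^2 + 2 * (\<omega> n)^2)"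
      using Suc Xint2[of n] by (intro Bochner_Integration.integrable_add integrable_mult_right)
    moreover have "(\<lambda>\<omega>. (S (Suc n) \<omega>)^2) \<in> borel_measurable P" using Sm by measurable
    moreover have "AE \<omega> in P. norm ((S (Suc n) \<omega>)^2) \<le> norm (2 * (S n \<omega>)^2 + 2 * (\<omega> n)^2)"
    proof (rule AE_I2)
      fix \<omega>
      have "(S (Suc n) \<omega>)^2 = (S n \<omega> + \<omega> n)^2" by (simp add: S_def)
      also have "\<dots> \<le> 2 * (S n \<omega>)^2 + 2 * (\<omega> n)^2" by (rule sq)
      finally show "norm ((S (Suc n) \<omega>)^2) \<le> norm (2 * (S n \<omega>)^2 + 2 * (\<omega> n)^2)" by simp
    qed
    ultimately show ?case by (rule Bochner_Integration.integrable_bound)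
  qed
  have Dfin: "D n \<in> finvar_dists" for n
  proof -
    have "real_distribution (D n)" unfolding D_def using Sm[of n] unfolding P_def
      by (rule P.real_distribution_distr)
    moreover have "integrable (D n) (\<lambda>x. x^2)" unfolding D_def
      by (subst integrable_distr_eq[OF Sm]) (auto intro: Sint2)
    ultimately show ?thesis by (simp add: finvar_dists_def)
  qed
  have D1: "D (Suc 0) = M"
  proof -
    have "S (Suc 0) = (\<lambda>\<omega>. \<omega> 0)" by (simp add: S_def fun_eq_iff)
    then show ?thesis unfolding D_def using Xd[of 0] by simp
  qed
  have Dsuc: "D (Suc n) = (M \<star> D n)" for n
  proof -
    have ind: "P.indep_var borel (\<lambda>\<omega>. \<omega> n) borel (\<lambda>\<omega>. \<Sum>i\<in>{..<n}. \<omega> i)"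
      by (rule P.indep_vars_sum) (auto intro: P.indep_vars_subset[OF indep])
    have ind': "P.indep_var borel (\<lambda>\<omega>. \<omega> n) borel (S n)"
      using ind by (simp add: S_def[abs_def])
    have "S (Suc n) = (\<lambda>\<omega>. \<omega> n + S n \<omega>)" by (auto simp: S_def fun_eq_iff)
    then have "D (Suc n) = distr P borel (\<lambda>\<omega>. \<omega> n + S n \<omega>)" by (simp add: D_def)
    also have "\<dots> = (distr P borel (\<lambda>\<omega>. \<omega> n) \<star> distr P borel (S n))"
      unfolding P_def
      by (rule P.sum_indep_random_variable[OF ind']) (use Sm Xrv in \<open>simp_all add: P_def\<close>)
    finally show ?thesis by (simp add: Xd D_def)
  qed
  have TD: "T (D (Suc n)) = real (Suc n) * T M" for n
  proof (induction n)
    case 0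
    then show ?case using D1 by simp
  next
    case (Suc n)
    have "T (D (Suc (Suc n))) = T (M \<star> D (Suc n))" using Dsuc by simp
    also have "\<dots> = T M + T (D (Suc n))"
      using add Mf Dfin unfolding additive_location_def by blast
    finally show ?case using Suc by (simp add: algebra_simps)
  qed
  define s where "s n = sqrt (real n * \<sigma>^2)" for n :: nat
  define Z where "Z n = distr P borel (\<lambda>x. (\<Sum>i<n. x i - \<mu>) / s n)" for n
  have Zeq: "Z n = distr (D n) borel (\<lambda>y. (1 / s n) * y + (- (real n * \<mu>) / s n))" for n
  proof -
    have "distr (D n) borel (\<lambda>y. (1 / s n) * y + (- (real n * \<mu>) / s n))
        = distr P borel ((\<lambda>y. (1 / s n) * y + (- (real n * \<mu>) / s n)) \<circ> S n)"
      unfolding D_def by (rule distr_distr) (use Sm in auto)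
    also have "\<dots> = Z n" unfolding Z_def
      by (rule distr_cong) (auto simp: S_def sum_subtractf diff_divide_distrib)
    finally show ?thesis ..
  qed
  have Zfin: "\<forall>n. Z n \<in> finvar_dists"
    unfolding Zeq using Dfin finvar_affine by blast
  have TZ: "T (Z n) = (1 / s n) * T (D n) + (- (real n * \<mu>) / s n)" for n
    unfolding Zeq using loc Dfin unfolding location_measure_def by blast
  have lim: "(\<lambda>n. T (Z n)) \<longlonglongrightarrow> 0"
    using cont[OF Zfin] clt T0 unfolding Z_def s_def by simp
  have inv0: "(\<lambda>n. inverse (sqrt (real n))) \<longlonglongrightarrow> 0"
    by (rule tendsto_inverse_0_at_top[OF filterlim_compose[OF sqrt_at_top filterlim_real_sequentially]])
  have "(\<lambda>n. T (Z n) * inverse (sqrt (real n))) \<longlonglongrightarrow> 0 * 0"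
    by (rule tendsto_mult[OF lim inv0])
  moreover have "eventually (\<lambda>n. T (Z n) * inverse (sqrt (real n)) = (T M - \<mu>) / \<sigma>) sequentially"
  proof (rule eventually_sequentiallyI[of 1])
    fix n :: nat assume "1 \<le> n"
    then obtain k where k: "n = Suc k" by (cases n) auto
    have sn: "s n = sqrt (real n) * \<sigma>" using sig by (simp add: s_def real_sqrt_mult)
    have pos: "sqrt (real n) > 0" using k by simp
    have TDn: "T (D n) = real n * T M" using TD[of k] k by simp
    have "T (Z n) = (1 / s n) * (real n * T M) + (- (real n * \<mu>) / s n)"
      using TZ[of n] unfolding TDn .
    also have "\<dots> = (real n * T M - real n * \<mu>) / s n"
      by (simp add: diff_divide_distrib)
    also have "\<dots> = (real n * T M - real n * \<mu>) / (sqrt (real n) * \<sigma>)"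
      unfolding sn ..
    finally have "T (Z n) = (real n * T M - real n * \<mu>) / (sqrt (real n) * \<sigma>)" .
    also have "\<dots> = sqrt (real n) * (T M - \<mu>) / \<sigma>"
    proof -
      have "real n = sqrt (real n) * sqrt (real n)" by simp
      then show ?thesis using pos sig by (simp add: field_simps)
    qed
    finally show "T (Z n) * inverse (sqrt (real n)) = (T M - \<mu>) / \<sigma>"
      using pos sig by (simp add: field_simps)
  qed
  ultimately have "(\<lambda>n. (T M - \<mu>) / \<sigma>) \<longlonglongrightarrow> 0"
    using Lim_transform_eventually by fastforce
  then have "(T M - \<mu>) / \<sigma> = 0" by (simp add: LIMSEQ_const_iff)
  then show ?thesis using sig \<mu>_def by simp
qed


theorem theorem1:
  fixes T :: "real measure \<Rightarrow> real"
  assumes loc: "location_measure T"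
    and add: "additive_location T"
    and cont: "\<And>Z. (\<forall>n. Z n \<in> finvar_dists) \<Longrightarrow> weak_conv_m Z std_normal_distribution \<Longrightarrow>
                 (\<lambda>n. T (Z n)) \<longlonglongrightarrow> T std_normal_distribution"
    and "T std_normal_distribution = 0"
  shows "\<forall>M\<in>finvar_dists. T M = (\<integral>x. x \<partial>M)"
proof
  fix M assume Mf: "M \<in> finvar_dists"
  interpret real_distribution M using Mf by (simp add: finvar_dists_def)
  have i2: "integrable M (\<lambda>x. x^2)" using Mf by (simp add: finvar_dists_def)
  have i1: "integrable M (\<lambda>x. x)"
    by (rule square_integrable_imp_integrable[OF _ i2]) simp
  define \<mu> where "\<mu> = (\<integral>x. x \<partial>M)"
  define v where "v = (\<integral>x. (x - \<mu>)^2 \<partial>M)"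
  have iv: "integrable M (\<lambda>x. (x - \<mu>)^2)"
  proof -
    have "integrable M (\<lambda>x. x^2 - 2 * \<mu> * x + \<mu>^2)" using i1 i2 by auto
    then show ?thesis by (simp add: power2_diff algebra_simps)
  qed
  have v0: "v \<ge> 0" unfolding v_def by (rule Bochner_Integration.integral_nonneg) simp
  show "T M = (\<integral>x. x \<partial>M)"
  proof (cases "v > 0")
    case True
    show ?thesis
      by (rule pos_case[OF loc add cont \<open>T std_normal_distribution = 0\<close> Mf, of "sqrt v"])
         (use True in \<open>simp_all add: v_def \<mu>_def\<close>)
  next
    case False
    then have "v = 0" using v0 by simp
    then have "AE x in M. (x - \<mu>)^2 = 0"
      unfolding v_def by (subst (asm) integral_nonneg_eq_0_iff_AE[OF iv]) auto
    then have ae: "AE x in M. 0 * x + \<mu> = x" by (auto elim: AE_mp)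
    have "distr M borel (\<lambda>x. 0 * x + \<mu>) = distr M borel (\<lambda>x. x)"
      by (rule distr_cong_AE) (use ae in auto)
    also have "\<dots> = M" by (rule distr_id2) simp
    finally have eq: "distr M borel (\<lambda>x. 0 * x + \<mu>) = M" .
    have "T (distr M borel (\<lambda>x. 0 * x + \<mu>)) = 0 * T M + \<mu>"
      using loc Mf unfolding location_measure_def by blast
    then have "T M = 0 * T M + \<mu>" by (simp only: eq)
    then show ?thesis unfolding \<mu>_def by simp
  qed
qed

end
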